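(* Let $S$ be a rectangular band semigroup and let $\omega$ be a separable weight on $S$. Then $\ell^{1}(S,\omega)$ is biprojective, and hence biflat.
   Context: A band semigroup is a semigroup $S$ with $s^2=s$ for all $s\in S$; it is a rectangular band semigroup if moreover $sts=s$ for all $s,t\in S$. Every rectangular band semigroup is isomorphic to $L\times R$ (coordinatewise product) where $L$ is a left zero semigroup ($st=s$ for all $s,t$) and $R$ is a right zero semigroup ($st=t$ for all $s,t$). A weight on a semigroup $S$ is a function $\omega:S\to(0,\infty)$ with $\omega(st)\le\omega(s)\omega(t)$. For $S=S_1\times S_2$, a weight $\omega$ on $S$ is separable if there are weights $\omega_1$ on $S_1$ and $\omega_2$ on $S_2$ with $\omega(s_1,s_2)=\omega_1(s_1)\omega_2(s_2)$; here $S$ is identified with $L\times R$. The Beurling algebra $\ell^{1}(S,\omega)$ is the space of $f=\sum_s f(s)\delta_s$ with $\sum_s|f(s)|\omega(s)<\infty$, with convolution $\delta_s*\delta_t=\delta_{st}$. A Banach algebra $\mathcal{A}$ is biprojective if there is a bounded $\mathcal{A}$-bimodule homomorphism $\rho:\mathcal{A}\to\mathcal{A}\hat{\otimes}\mathcal{A}$ with $\pi\circ\rho=I_{\mathcal{A}}$, where $\pi(a\otimes b)=ab$; it is biflat if there is a bounded $\mathcal{A}$-bimodule homomorphism $\rho:\mathcal{A}\to(\mathcal{A}\hat{\otimes}\mathcal{A})^{**}$ with $\pi^{**}\circ\rho=k_{\mathcal{A}}$, the canonical embedding $\mathcal{A}\to\mathcal{A}^{**}$. *)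

theory Defs
  imports "HOL-Analysis.Analysis"
begin

text \<open>A semigroup is a type 's with a binary operation m; S is the whole type.\<close>

definition rect_band :: "('s \<Rightarrow> 's \<Rightarrow> 's) \<Rightarrow> bool" where
  "rect_band m \<longleftrightarrow>
     (\<forall>a b c. m (m a b) c = m a (m b c)) \<and> (\<forall>s. m s s = s) \<and> (\<forall>s t. m (m s t) s = s)"

definition is_weight :: "('s \<Rightarrow> 's \<Rightarrow> 's) \<Rightarrow> ('s \<Rightarrow> real) \<Rightarrow> bool" where
  "is_weight m w \<longleftrightarrow> (\<forall>s. 0 < w s) \<and> (\<forall>s t. w (m s t) \<le> w s * w t)"

text \<open>Identification of S with L x R (L left zero, R right zero, coordinatewise product).\<close>
definition rect_band_iso :: "('s \<Rightarrow> 's \<Rightarrow> 's) \<Rightarrow> ('s \<Rightarrow> 'l \<times> 'r) \<Rightarrow> bool" where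
  "rect_band_iso m \<phi> \<longleftrightarrow> bij \<phi> \<and> (\<forall>s t. \<phi> (m s t) = (fst (\<phi> s), snd (\<phi> t)))"

text \<open>Separable weight w.r.t. the identification phi: w = w1 (x) w2 with w1 a weight on the
  left zero semigroup L and w2 a weight on the right zero semigroup R.\<close>
definition separable_weight :: "('s \<Rightarrow> 'l \<times> 'r) \<Rightarrow> ('s \<Rightarrow> real) \<Rightarrow> bool" where
  "separable_weight \<phi> w \<longleftrightarrow>
     (\<exists>(w1 :: 'l \<Rightarrow> real) (w2 :: 'r \<Rightarrow> real).
        is_weight (\<lambda>a b. a) w1 \<and> is_weight (\<lambda>a b. b) w2 \<and>
        (\<forall>s. w s = w1 (fst (\<phi> s)) * w2 (snd (\<phi> s))))"

definition l1 :: "('a \<Rightarrow> real) \<Rightarrow> ('a \<Rightarrow> complex) set" where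
  "l1 w = {f. (\<lambda>s. norm (f s) * w s) summable_on UNIV}"

definition l1_norm :: "('a \<Rightarrow> real) \<Rightarrow> ('a \<Rightarrow> complex) \<Rightarrow> real" where
  "l1_norm w f = (\<Sum>\<^sub>\<infinity>s. norm (f s) * w s)"

text \<open>Convolution: delta_s * delta_t = delta_(st).\<close>
definition conv :: "('s \<Rightarrow> 's \<Rightarrow> 's) \<Rightarrow> ('s \<Rightarrow> complex) \<Rightarrow> ('s \<Rightarrow> complex) \<Rightarrow> 's \<Rightarrow> complex" where
  "conv m f g u = (\<Sum>\<^sub>\<infinity>(s, t)\<in>{(s, t). m s t = u}. f s * g t)"

section \<open>The projective tensor product l1(S,w) (x)^ l1(S,w) = l1(S x S, w x w)\<close>

definition tw :: "('s \<Rightarrow> real) \<Rightarrow> ('s \<times> 's \<Rightarrow> real)" where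
  "tw w = (\<lambda>(s, t). w s * w t)"

text \<open>Product map pi(a (x) b) = ab, i.e. pi(delta_(s,t)) = delta_(st).\<close>
definition tpi :: "('s \<Rightarrow> 's \<Rightarrow> 's) \<Rightarrow> ('s \<times> 's \<Rightarrow> complex) \<Rightarrow> 's \<Rightarrow> complex" where
  "tpi m F u = (\<Sum>\<^sub>\<infinity>(s, t)\<in>{(s, t). m s t = u}. F (s, t))"

text \<open>Bimodule actions a.(b (x) c) = ab (x) c and (b (x) c).a = b (x) ca.\<close>
definition tlact :: "('s \<Rightarrow> 's \<Rightarrow> 's) \<Rightarrow> ('s \<Rightarrow> complex) \<Rightarrow> ('s \<times> 's \<Rightarrow> complex) \<Rightarrow> 's \<times> 's \<Rightarrow> complex" where
  "tlact m a F = (\<lambda>(u, t). \<Sum>\<^sub>\<infinity>(x, s)\<in>{(x, s). m x s = u}. a x * F (s, t))"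

definition tract :: "('s \<Rightarrow> 's \<Rightarrow> 's) \<Rightarrow> ('s \<times> 's \<Rightarrow> complex) \<Rightarrow> ('s \<Rightarrow> complex) \<Rightarrow> 's \<times> 's \<Rightarrow> complex" where
  "tract m F a = (\<lambda>(s, u). \<Sum>\<^sub>\<infinity>(t, y)\<in>{(t, y). m t y = u}. F (s, t) * a y)"

section \<open>Duals and biduals (functionals are represented by their values on the carrier)\<close>

definition clinear_on :: "('a \<Rightarrow> complex) set \<Rightarrow> (('a \<Rightarrow> complex) \<Rightarrow> complex) \<Rightarrow> bool" where
  "clinear_on X \<psi> \<longleftrightarrow> (\<forall>f\<in>X. \<forall>g\<in>X. \<forall>c. \<psi> (\<lambda>x. f x + c * g x) = \<psi> f + c * \<psi> g)"

definition dual :: "('a \<Rightarrow> complex) set \<Rightarrow> (('a \<Rightarrow> complex) \<Rightarrow> real)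
                     \<Rightarrow> (('a \<Rightarrow> complex) \<Rightarrow> complex) set" where
  "dual X N = {\<psi>. clinear_on X \<psi> \<and> (\<exists>K. \<forall>f\<in>X. norm (\<psi> f) \<le> K * N f)}"

definition dual_norm :: "('a \<Rightarrow> complex) set \<Rightarrow> (('a \<Rightarrow> complex) \<Rightarrow> real)
                     \<Rightarrow> (('a \<Rightarrow> complex) \<Rightarrow> complex) \<Rightarrow> real" where
  "dual_norm X N \<psi> = Sup ((\<lambda>f. norm (\<psi> f)) ` {f\<in>X. N f \<le> 1})"

definition biprojective_l1 :: "('s \<Rightarrow> 's \<Rightarrow> 's) \<Rightarrow> ('s \<Rightarrow> real) \<Rightarrow> bool" where
  "biprojective_l1 m w \<longleftrightarrow>
    (\<exists>(\<rho> :: ('s \<Rightarrow> complex) \<Rightarrow> ('s \<times> 's \<Rightarrow> complex)) C.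
       (\<forall>a\<in>l1 w. \<rho> a \<in> l1 (tw w)) \<and>
       (\<forall>a\<in>l1 w. \<forall>b\<in>l1 w. \<forall>c. \<rho> (\<lambda>x. a x + c * b x) = (\<lambda>p. \<rho> a p + c * \<rho> b p)) \<and>
       (\<forall>a\<in>l1 w. l1_norm (tw w) (\<rho> a) \<le> C * l1_norm w a) \<and>
       (\<forall>a\<in>l1 w. \<forall>b\<in>l1 w. \<rho> (conv m a b) = tlact m a (\<rho> b) \<and> \<rho> (conv m b a) = tract m (\<rho> b) a) \<and>
       (\<forall>a\<in>l1 w. tpi m (\<rho> a) = a))"

definition biflat_l1 :: "('s \<Rightarrow> 's \<Rightarrow> 's) \<Rightarrow> ('s \<Rightarrow> real) \<Rightarrow> bool" where
  "biflat_l1 m w \<longleftrightarrow>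
    (let T = l1 (tw w); NT = l1_norm (tw w); TD = dual T NT;
         A = l1 w; NA = l1_norm w; AD = dual A NA
     in
    (\<exists>(\<rho> :: ('s \<Rightarrow> complex) \<Rightarrow> ((('s \<times> 's \<Rightarrow> complex) \<Rightarrow> complex) \<Rightarrow> complex)) C.
       (\<forall>a\<in>A. \<rho> a \<in> dual TD (dual_norm T NT)) \<and>
       (\<forall>a\<in>A. \<forall>b\<in>A. \<forall>c. \<forall>\<psi>\<in>TD. \<rho> (\<lambda>x. a x + c * b x) \<psi> = \<rho> a \<psi> + c * \<rho> b \<psi>) \<and>
       (\<forall>a\<in>A. dual_norm TD (dual_norm T NT) (\<rho> a) \<le> C * NA a) \<and>
       (\<forall>a\<in>A. \<forall>b\<in>A. \<forall>\<psi>\<in>TD.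
           \<rho> (conv m a b) \<psi> = \<rho> b (\<lambda>F. \<psi> (tlact m a F)) \<and>
           \<rho> (conv m b a) \<psi> = \<rho> b (\<lambda>F. \<psi> (tract m F a))) \<and>
       (\<forall>a\<in>A. \<forall>\<psi>\<in>AD. \<rho> a (\<lambda>F. \<psi> (tpi m F)) = \<psi> a)))"

end

theory Submission
  imports Defs
begin

lemma l1_scale:
  assumes "F \<in> l1 v"
  shows "(\<lambda>x. c * F x) \<in> l1 v"
proof -
  have "(\<lambda>x. norm c * (norm (F x) * v x)) summable_on UNIV"
    using assms unfolding l1_def by (intro summable_on_cmult_right) auto
  then show ?thesis unfolding l1_def by (simp add: norm_mult mult.assoc)
qed

lemma l1_norm_scale:
  "l1_norm v (\<lambda>x. c * F x) = norm c * l1_norm v F"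
proof -
  have "l1_norm v (\<lambda>x. c * F x) = (\<Sum>\<^sub>\<infinity>x. norm c * (norm (F x) * v x))"
    unfolding l1_norm_def by (simp add: norm_mult mult.assoc)
  also have "\<dots> = norm c * l1_norm v F"
    unfolding l1_norm_def by (rule infsum_cmult_right')
  finally show ?thesis .
qed

lemma l1_zero: "(\<lambda>x. 0) \<in> l1 v"
  unfolding l1_def by simp

lemma l1_norm_zero: "l1_norm v (\<lambda>x. 0) = 0"
  unfolding l1_norm_def by simp

lemma l1_norm_nonneg:
  assumes "\<And>x. 0 \<le> v x"
  shows "0 \<le> l1_norm v F"
  unfolding l1_norm_def using assms by (intro infsum_nonneg) auto

lemma l1_norm_eq0:
  assumes "\<And>x. 0 < v x" "F \<in> l1 v" "l1_norm v F = 0"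
  shows "F x = 0"
proof -
  have "(\<Sum>\<^sub>\<infinity>y\<in>{x}. norm (F y) * v y) \<le> (\<Sum>\<^sub>\<infinity>y\<in>UNIV. norm (F y) * v y)"
    using assms(1,2) unfolding l1_def
    by (intro infsum_mono_neutral) (auto intro!: mult_nonneg_nonneg simp: less_imp_le)
  then have "norm (F x) * v x \<le> 0" using assms(3) unfolding l1_norm_def by simp
  moreover have "0 < v x" using assms(1) by auto
  ultimately have "norm (F x) \<le> 0"
    by (simp add: mult_le_0_iff)
  then show ?thesis by simp
qed

lemma clin_zero:
  assumes "clinear_on X \<psi>" "(\<lambda>x. 0) \<in> X"
  shows "\<psi> (\<lambda>x. 0) = 0"
proof -
  have h: "\<And>f g c. f \<in> X \<Longrightarrow> g \<in> X \<Longrightarrow> \<psi> (\<lambda>x. f x + c * g x) = \<psi> f + c * \<psi> g"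
    using assms unfolding clinear_on_def by blast
  from h[of "\<lambda>x. 0" "\<lambda>x. 0" 1] assms(2) have "\<psi> (\<lambda>x. 0) = \<psi> (\<lambda>x. 0) + \<psi> (\<lambda>x. 0)" by simp
  then show ?thesis by simp
qed

lemma clin_scale:
  assumes "clinear_on X \<psi>" "(\<lambda>x. 0) \<in> X" "F \<in> X"
  shows "\<psi> (\<lambda>x. c * F x) = c * \<psi> F"
proof -
  have h: "\<And>f g c. f \<in> X \<Longrightarrow> g \<in> X \<Longrightarrow> \<psi> (\<lambda>x. f x + c * g x) = \<psi> f + c * \<psi> g"
    using assms unfolding clinear_on_def by blast
  from h[of "\<lambda>x. 0" F c] assms(2,3) have "\<psi> (\<lambda>x. c * F x) = \<psi> (\<lambda>x. 0) + c * \<psi> F" by simp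
  then show ?thesis using clin_zero[OF assms(1,2)] by simp
qed

lemma dual_bound:
  fixes v :: "'a \<Rightarrow> real"
  assumes pos: "\<And>x. 0 < v x" and psi: "\<psi> \<in> dual (l1 v) (l1_norm v)" and F: "F \<in> l1 v"
  shows "norm (\<psi> F) \<le> dual_norm (l1 v) (l1_norm v) \<psi> * l1_norm v F"
proof -
  have lin: "clinear_on (l1 v) \<psi>" using psi unfolding dual_def by auto
  obtain K where K: "\<And>f. f \<in> l1 v \<Longrightarrow> norm (\<psi> f) \<le> K * l1_norm v f"
    using psi unfolding dual_def by auto
  have nn: "\<And>f. 0 \<le> l1_norm v f" by (rule l1_norm_nonneg) (use pos in \<open>auto intro: less_imp_le\<close>)
  have bdd: "bdd_above ((\<lambda>f. norm (\<psi> f)) ` {f \<in> l1 v. l1_norm v f \<le> 1})"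
  proof (rule bdd_aboveI2)
    fix f assume "f \<in> {f \<in> l1 v. l1_norm v f \<le> 1}"
    then have f: "f \<in> l1 v" "l1_norm v f \<le> 1" by auto
    have "norm (\<psi> f) \<le> K * l1_norm v f" using K f by auto
    also have "\<dots> \<le> \<bar>K\<bar> * l1_norm v f" using nn[of f] by (intro mult_right_mono) auto
    also have "\<dots> \<le> \<bar>K\<bar> * 1" using f(2) by (intro mult_left_mono) auto
    finally show "norm (\<psi> f) \<le> \<bar>K\<bar>" by simp
  qed
  show ?thesis
  proof (cases "l1_norm v F = 0")
    case True
    then have "F = (\<lambda>x. 0)" using l1_norm_eq0[OF pos F] by auto
    then show ?thesis using clin_zero[OF lin l1_zero] True by simp
  next
    case False
    then have Fp: "0 < l1_norm v F" using nn[of F] by auto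
    define G where "G = (\<lambda>x. (1 / l1_norm v F) * F x)"
    have G: "G \<in> l1 v" unfolding G_def by (rule l1_scale[OF F])
    have NG: "l1_norm v G = 1" unfolding G_def l1_norm_scale using Fp by (simp add: norm_divide)
    have "norm (\<psi> G) \<le> dual_norm (l1 v) (l1_norm v) \<psi>"
      unfolding dual_norm_def by (rule cSup_upper[OF _ bdd]) (use G NG in auto)
    moreover have "\<psi> G = (1 / l1_norm v F) * \<psi> F"
      unfolding G_def by (rule clin_scale[OF lin l1_zero F])
    ultimately have "norm (\<psi> F) / l1_norm v F \<le> dual_norm (l1 v) (l1_norm v) \<psi>"
      using Fp by (simp add: norm_mult norm_divide)
    then show ?thesis using Fp by (simp add: divide_le_eq)
  qed
qed


lemma tw_pos: "(\<And>s. 0 < w s) \<Longrightarrow> 0 < tw w z"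
  unfolding tw_def by (cases z) auto

lemma biprojective_imp_biflat:
  fixes m :: "'s \<Rightarrow> 's \<Rightarrow> 's" and w :: "'s \<Rightarrow> real"
  assumes bp: "biprojective_l1 m w" and pos: "\<And>s. 0 < w s"
  shows "biflat_l1 m w"
proof -
  obtain \<rho> C where
    r1: "\<forall>a\<in>l1 w. \<rho> a \<in> l1 (tw w)" and
    r2: "\<forall>a\<in>l1 w. \<forall>b\<in>l1 w. \<forall>c. \<rho> (\<lambda>x. a x + c * b x) = (\<lambda>p. \<rho> a p + c * \<rho> b p)" and
    r3: "\<forall>a\<in>l1 w. l1_norm (tw w) (\<rho> a) \<le> C * l1_norm w a" and
    r4: "\<forall>a\<in>l1 w. \<forall>b\<in>l1 w. \<rho> (conv m a b) = tlact m a (\<rho> b) \<and> \<rho> (conv m b a) = tract m (\<rho> b) a" and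
    r5: "\<forall>a\<in>l1 w. tpi m (\<rho> a) = a"
    using bp unfolding biprojective_l1_def by blast
  define T where "T = l1 (tw w)"
  define NT where "NT = l1_norm (tw w)"
  define TD where "TD = dual T NT"
  define N' where "N' = dual_norm T NT"
  have tpos: "\<And>z. 0 < tw w z" by (rule tw_pos[OF pos])
  have bound: "\<And>\<psi> F. \<psi> \<in> TD \<Longrightarrow> F \<in> T \<Longrightarrow> norm (\<psi> F) \<le> N' \<psi> * NT F"
    unfolding TD_def N'_def T_def NT_def by (rule dual_bound[OF tpos])
  have NTnn: "\<And>F. 0 \<le> NT F" unfolding NT_def
    by (rule l1_norm_nonneg) (use tpos in \<open>auto intro: less_imp_le\<close>)
  have lin: "\<And>\<psi> f g c. \<psi> \<in> TD \<Longrightarrow> f \<in> T \<Longrightarrow> g \<in> T \<Longrightarrow> \<psi> (\<lambda>x. f x + c * g x) = \<psi> f + c * \<psi> g"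
    unfolding TD_def dual_def clinear_on_def by blast
  have zTD: "(\<lambda>F. 0) \<in> TD"
    unfolding TD_def dual_def clinear_on_def by (auto intro!: exI[of _ 0])
  have zN: "N' (\<lambda>F. 0) \<le> 1"
  proof -
    have "(\<lambda>f. norm ((\<lambda>F. 0::complex) f)) ` {f \<in> T. NT f \<le> 1} = {0}"
      using l1_zero[of "tw w"] l1_norm_zero[of "tw w"] unfolding T_def NT_def by auto
    then show ?thesis unfolding N'_def dual_norm_def by simp
  qed
  define \<rho>' :: "('s \<Rightarrow> complex) \<Rightarrow> ((('s \<times> 's \<Rightarrow> complex) \<Rightarrow> complex) \<Rightarrow> complex)" where "\<rho>' = (\<lambda>a \<psi>. \<psi> (\<rho> a))"
  have c1: "\<forall>a\<in>l1 w. \<rho>' a \<in> dual TD N'"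
  proof
    fix a assume a: "a \<in> l1 w"
    have "clinear_on TD (\<rho>' a)" unfolding clinear_on_def \<rho>'_def by simp
    moreover have "\<forall>\<psi>\<in>TD. norm (\<rho>' a \<psi>) \<le> NT (\<rho> a) * N' \<psi>"
      using bound r1 a unfolding \<rho>'_def T_def by (auto simp: mult.commute)
    ultimately show "\<rho>' a \<in> dual TD N'" unfolding dual_def by blast
  qed
  have c2: "\<forall>a\<in>l1 w. \<forall>b\<in>l1 w. \<forall>c. \<forall>\<psi>\<in>TD. \<rho>' (\<lambda>x. a x + c * b x) \<psi> = \<rho>' a \<psi> + c * \<rho>' b \<psi>"
    using r2 r1 lin unfolding \<rho>'_def T_def by simp
  have c3: "\<forall>a\<in>l1 w. dual_norm TD N' (\<rho>' a) \<le> C * l1_norm w a"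
  proof
    fix a assume a: "a \<in> l1 w"
    have "dual_norm TD N' (\<rho>' a) \<le> NT (\<rho> a)"
      unfolding dual_norm_def
    proof (rule cSup_least)
      show "(\<lambda>f. norm (\<rho>' a f)) ` {f \<in> TD. N' f \<le> 1} \<noteq> {}" using zTD zN by auto
    next
      fix x assume "x \<in> (\<lambda>f. norm (\<rho>' a f)) ` {f \<in> TD. N' f \<le> 1}"
      then obtain \<psi> where psi: "\<psi> \<in> TD" "N' \<psi> \<le> 1" and x: "x = norm (\<psi> (\<rho> a))"
        unfolding \<rho>'_def by auto
      have "x \<le> N' \<psi> * NT (\<rho> a)" using bound[OF psi(1)] r1 a x unfolding T_def by auto
      also have "\<dots> \<le> 1 * NT (\<rho> a)" using psi(2) NTnn by (intro mult_right_mono) auto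
      finally show "x \<le> NT (\<rho> a)" by simp
    qed
    also have "\<dots> \<le> C * l1_norm w a" using r3 a unfolding NT_def by auto
    finally show "dual_norm TD N' (\<rho>' a) \<le> C * l1_norm w a" .
  qed
  have c4: "\<forall>a\<in>l1 w. \<forall>b\<in>l1 w. \<forall>\<psi>\<in>TD.
           \<rho>' (conv m a b) \<psi> = \<rho>' b (\<lambda>F. \<psi> (tlact m a F)) \<and>
           \<rho>' (conv m b a) \<psi> = \<rho>' b (\<lambda>F. \<psi> (tract m F a))"
    using r4 unfolding \<rho>'_def by metis
  have c5: "\<forall>a\<in>l1 w. \<forall>\<psi>\<in>dual (l1 w) (l1_norm w). \<rho>' a (\<lambda>F. \<psi> (tpi m F)) = \<psi> a"
    using r5 unfolding \<rho>'_def by simp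
  show ?thesis unfolding biflat_l1_def Let_def
    using c1 c2 c3 c4 c5 unfolding TD_def N'_def T_def NT_def by blast
qed


lemma rb_biprojective:
  fixes m :: "'s \<Rightarrow> 's \<Rightarrow> 's" and \<phi> :: "'s \<Rightarrow> 'l \<times> 'r" and w :: "'s \<Rightarrow> real"
  assumes inj: "inj \<phi>" and hom: "\<And>s t. \<phi> (m s t) = (fst (\<phi> s), snd (\<phi> t))"
    and ws: "\<And>s. w s = w1 (fst (\<phi> s)) * w2 (snd (\<phi> s))"
  shows "biprojective_l1 m w"
proof -
  have key: "\<And>a b c. (m a b = c) \<longleftrightarrow> (fst (\<phi> a) = fst (\<phi> c) \<and> snd (\<phi> b) = snd (\<phi> c))"
  proof -
    fix a b c
    have "(m a b = c) \<longleftrightarrow> \<phi> (m a b) = \<phi> c" by (rule inj_eq[OF inj, symmetric])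
    then show "(m a b = c) \<longleftrightarrow> (fst (\<phi> a) = fst (\<phi> c) \<and> snd (\<phi> b) = snd (\<phi> c))"
      by (simp add: hom prod_eq_iff)
  qed
  have key': "\<And>a b c. (c = m a b) \<longleftrightarrow> (fst (\<phi> a) = fst (\<phi> c) \<and> snd (\<phi> b) = snd (\<phi> c))"
    using key by metis
  have A: "\<And>x y z. m (m x y) z = m x z" by (simp add: key hom)
  have Bm: "\<And>x y z. m x (m y z) = m x z" by (simp add: key hom)
  have Y: "\<And>x y p q. m x y = m p q \<Longrightarrow> m y q = y" by (simp add: key hom)
  have Y2: "\<And>x y p q. m x y = m p q \<Longrightarrow> m p x = x" by (simp add: key hom)
  have Z: "\<And>x y p q s. m x y = m p q \<Longrightarrow> m x s = m p s" by (simp add: key hom)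
  have Z2: "\<And>x y p q s. m x y = m p q \<Longrightarrow> m s y = m s q" by (simp add: key hom)
  define s0 :: 's where "s0 = undefined"
  define D where "D = {(p, q). m p s0 = p \<and> m s0 q = q}"
  define \<rho> :: "('s \<Rightarrow> complex) \<Rightarrow> ('s \<times> 's \<Rightarrow> complex)"
    where "\<rho> = (\<lambda>a (p, q). if m p s0 = p \<and> m s0 q = q then a (m p q) else 0)"
  define g where "g = (\<lambda>u. (m u s0, m s0 u))"
  have bijD: "bij_betw g UNIV D"
    by (rule bij_betw_byWitness[where f' = "\<lambda>(p, q). m p q"])
       (auto simp: g_def D_def key key' hom)
  have mg: "\<And>u. m (m u s0) (m s0 u) = u" by (simp add: key hom)
  have wg: "\<And>u. tw w (g u) = w s0 * w u" by (simp add: tw_def g_def ws hom)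
  have \<rho>g: "\<And>a u. \<rho> a (g u) = a u" by (simp add: \<rho>_def g_def mg key hom)
  have outside: "\<And>a z. z \<notin> D \<Longrightarrow> \<rho> a z = 0" by (auto simp: \<rho>_def D_def split: if_splits)
  define h where "h = (\<lambda>a z. norm (\<rho> a z) * tw w z)"
  have hg: "\<And>a u. h a (g u) = w s0 * (norm (a u) * w u)"
    by (simp add: h_def \<rho>g wg)
  have sum1: "\<And>a. h a summable_on UNIV \<longleftrightarrow> h a summable_on D"
    by (rule summable_on_cong_neutral) (auto simp: h_def outside)
  have inf1: "\<And>a. infsum (h a) UNIV = infsum (h a) D"
    by (rule infsum_cong_neutral) (auto simp: h_def outside)
  have sum2: "\<And>a. h a summable_on D \<longleftrightarrow> (\<lambda>u. w s0 * (norm (a u) * w u)) summable_on UNIV"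
    using summable_on_reindex_bij_betw[OF bijD] hg by (metis (no_types, lifting) summable_on_cong)
  have inf2: "\<And>a. infsum (h a) D = infsum (\<lambda>u. w s0 * (norm (a u) * w u)) UNIV"
    using infsum_reindex_bij_betw[OF bijD] hg by (metis (no_types, lifting) infsum_cong)
  have P1: "\<forall>a\<in>l1 w. \<rho> a \<in> l1 (tw w)"
  proof
    fix a assume "a \<in> l1 w"
    then have "(\<lambda>u. w s0 * (norm (a u) * w u)) summable_on UNIV"
      unfolding l1_def by (intro summable_on_cmult_right) auto
    then show "\<rho> a \<in> l1 (tw w)" using sum1 sum2 unfolding l1_def h_def by auto
  qed
  have P3: "\<forall>a\<in>l1 w. l1_norm (tw w) (\<rho> a) \<le> w s0 * l1_norm w a"
  proof
    fix a assume "a \<in> l1 w"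
    have "l1_norm (tw w) (\<rho> a) = infsum (h a) UNIV" unfolding l1_norm_def h_def by simp
    also have "\<dots> = w s0 * l1_norm w a" unfolding inf1 inf2 l1_norm_def
      by (rule infsum_cmult_right')
    finally show "l1_norm (tw w) (\<rho> a) \<le> w s0 * l1_norm w a" by simp
  qed
  have P2: "\<forall>a\<in>l1 w. \<forall>b\<in>l1 w. \<forall>c. \<rho> (\<lambda>x. a x + c * b x) = (\<lambda>p. \<rho> a p + c * \<rho> b p)"
    by (auto simp: \<rho>_def)
  have P5: "\<forall>a\<in>l1 w. tpi m (\<rho> a) = a"
  proof (intro ballI ext)
    fix a u
    have "tpi m (\<rho> a) u = infsum (\<lambda>z. \<rho> a z) {(s, t). m s t = u}"
      unfolding tpi_def by (simp add: case_prod_beta')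
    also have "\<dots> = infsum (\<lambda>_. a u) {g u}"
    proof (rule infsum_cong_neutral)
      fix x assume "x \<in> {g u} - {(s, t). m s t = u}" then show "a u = 0"
        by (auto simp: g_def mg)
    next
      fix x assume "x \<in> {(s, t). m s t = u} - {g u}" then show "\<rho> a x = 0"
        by (auto simp: g_def \<rho>_def key key' hom split: if_splits)
    next
      fix x assume "x \<in> {(s, t). m s t = u} \<inter> {g u}" then show "\<rho> a x = a u"
        by (auto simp: \<rho>g)
    qed
    also have "\<dots> = a u" by simp
    finally show "tpi m (\<rho> a) u = a u" .
  qed
  have L: "tlact m a (\<rho> b) = \<rho> (conv m a b)" for a b
  proof (rule ext, clarify)
    fix p q
    show "tlact m a (\<rho> b) (p, q) = \<rho> (conv m a b) (p, q)"
    proof (cases "m p s0 = p \<and> m s0 q = q")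
      case False
      have "tlact m a (\<rho> b) (p, q) = (\<Sum>\<^sub>\<infinity>(x, s)\<in>{(x, s). m x s = p}. a x * \<rho> b (s, q))"
        unfolding tlact_def by simp
      also have "\<dots> = 0"
        by (rule infsum_0) (use False in \<open>auto simp: \<rho>_def key key' hom split: if_splits\<close>)
      finally show ?thesis using False by (auto simp: \<rho>_def)
    next
      case True
      define E where "E = {(x, s). m x s = p \<and> m s s0 = s}"
      define B where "B = {(x, y). m x y = m p q}"
      define gl :: "'s \<times> 's \<Rightarrow> 's \<times> 's" where "gl = (\<lambda>(x, s). (x, m s q))"
      have bij: "bij_betw gl E B"
      proof (rule bij_betw_byWitness[where f' = "\<lambda>(x, y). (x, m y s0)"])
        show "\<forall>z\<in>E. (\<lambda>(x, y). (x, m y s0)) (gl z) = z" by (auto simp: gl_def E_def A)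
        show "\<forall>z\<in>B. gl ((\<lambda>(x, y). (x, m y s0)) z) = z" by (auto simp: gl_def B_def A dest: Y)
        show "gl ` E \<subseteq> B" by (auto simp: gl_def E_def B_def A Bm)
        show "(\<lambda>(x, y). (x, m y s0)) ` B \<subseteq> E"
        proof clarify
          fix x y assume xy: "(x, y) \<in> B"
          then have "m x s0 = m p s0" using Z unfolding B_def by blast
          then show "(x, m y s0) \<in> E" using True by (simp add: E_def Bm A)
        qed
      qed
      have "tlact m a (\<rho> b) (p, q) = (\<Sum>\<^sub>\<infinity>(x, s)\<in>{(x, s). m x s = p}. a x * \<rho> b (s, q))"
        unfolding tlact_def by simp
      also have "\<dots> = (\<Sum>\<^sub>\<infinity>(x, s)\<in>E. a x * b (m s q))"
        by (rule infsum_cong_neutral) (use True in \<open>auto simp: E_def \<rho>_def split: if_splits\<close>)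
      also have "(\<lambda>(x, s). a x * b (m s q)) = (\<lambda>z. (\<lambda>(x, y). a x * b y) (gl z))"
        by (rule ext) (auto simp: gl_def)
      also have "infsum (\<lambda>z. (\<lambda>(x, y). a x * b y) (gl z)) E = infsum (\<lambda>(x, y). a x * b y) B"
        by (rule infsum_reindex_bij_betw[OF bij])
      also have "\<dots> = \<rho> (conv m a b) (p, q)"
        using True by (simp add: \<rho>_def conv_def B_def)
      finally show ?thesis .
    qed
  qed
  have R: "tract m (\<rho> b) a = \<rho> (conv m b a)" for a b
  proof (rule ext, clarify)
    fix p q
    show "tract m (\<rho> b) a (p, q) = \<rho> (conv m b a) (p, q)"
    proof (cases "m p s0 = p \<and> m s0 q = q")
      case False
      have "tract m (\<rho> b) a (p, q) = (\<Sum>\<^sub>\<infinity>(t, y)\<in>{(t, y). m t y = q}. \<rho> b (p, t) * a y)"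
        unfolding tract_def by simp
      also have "\<dots> = 0"
        by (rule infsum_0) (use False in \<open>auto simp: \<rho>_def key key' hom split: if_splits\<close>)
      finally show ?thesis using False by (auto simp: \<rho>_def)
    next
      case True
      define E where "E = {(t, y). m t y = q \<and> m s0 t = t}"
      define B where "B = {(x, y). m x y = m p q}"
      define gl :: "'s \<times> 's \<Rightarrow> 's \<times> 's" where "gl = (\<lambda>(t, y). (m p t, y))"
      have bij: "bij_betw gl E B"
      proof (rule bij_betw_byWitness[where f' = "\<lambda>(x, y). (m s0 x, y)"])
        show "\<forall>z\<in>E. (\<lambda>(x, y). (m s0 x, y)) (gl z) = z" by (auto simp: gl_def E_def Bm)
        show "\<forall>z\<in>B. gl ((\<lambda>(x, y). (m s0 x, y)) z) = z" by (auto simp: gl_def B_def Bm dest: Y2)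
        show "gl ` E \<subseteq> B" by (auto simp: gl_def E_def B_def A Bm)
        show "(\<lambda>(x, y). (m s0 x, y)) ` B \<subseteq> E"
        proof clarify
          fix x y assume xy: "(x, y) \<in> B"
          then have "m s0 y = m s0 q" using Z2 unfolding B_def by blast
          then show "(m s0 x, y) \<in> E" using True by (simp add: E_def Bm A)
        qed
      qed
      have "tract m (\<rho> b) a (p, q) = (\<Sum>\<^sub>\<infinity>(t, y)\<in>{(t, y). m t y = q}. \<rho> b (p, t) * a y)"
        unfolding tract_def by simp
      also have "\<dots> = (\<Sum>\<^sub>\<infinity>(t, y)\<in>E. b (m p t) * a y)"
        by (rule infsum_cong_neutral) (use True in \<open>auto simp: E_def \<rho>_def split: if_splits\<close>)
      also have "(\<lambda>(t, y). b (m p t) * a y) = (\<lambda>z. (\<lambda>(x, y). b x * a y) (gl z))"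
        by (rule ext) (auto simp: gl_def)
      also have "infsum (\<lambda>z. (\<lambda>(x, y). b x * a y) (gl z)) E = infsum (\<lambda>(x, y). b x * a y) B"
        by (rule infsum_reindex_bij_betw[OF bij])
      also have "\<dots> = \<rho> (conv m b a) (p, q)"
        using True by (simp add: \<rho>_def conv_def B_def)
      finally show ?thesis .
    qed
  qed
  have P4: "\<forall>a\<in>l1 w. \<forall>b\<in>l1 w. \<rho> (conv m a b) = tlact m a (\<rho> b) \<and> \<rho> (conv m b a) = tract m (\<rho> b) a"
    using L R by simp
  show ?thesis unfolding biprojective_l1_def
    by (rule exI[of _ \<rho>], rule exI[of _ "w s0"]) (intro conjI P1 P2 P3 P4 P5)
qed


theorem proposition2p3:
  fixes m :: "'s \<Rightarrow> 's \<Rightarrow> 's" and \<phi> :: "'s \<Rightarrow> 'l \<times> 'r" and w :: "'s \<Rightarrow> real"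
  assumes "rect_band m"
    and "rect_band_iso m \<phi>"
    and "is_weight m w"
    and "separable_weight \<phi> w"
  shows "biprojective_l1 m w \<and> biflat_l1 m w"
proof -
  have inj: "inj \<phi>" and hom: "\<And>s t. \<phi> (m s t) = (fst (\<phi> s), snd (\<phi> t))"
    using assms(2) unfolding rect_band_iso_def bij_def by auto
  obtain w1 w2 where ws: "\<And>s. w s = w1 (fst (\<phi> s)) * w2 (snd (\<phi> s))"
    using assms(4) unfolding separable_weight_def by blast
  have pos: "\<And>s. 0 < w s" using assms(3) unfolding is_weight_def by auto
  have bp: "biprojective_l1 m w" by (rule rb_biprojective[where m = m and \<phi> = \<phi> and w = w and ?w1.0 = w1 and ?w2.0 = w2, OF inj hom ws])
  then show ?thesis using biprojective_imp_biflat[OF bp pos] by simp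
qed

end
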